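(* Let $a>0$, $\alpha\in[0,1)$ and $f\in\mathcal C_a$. Then $\mathrm{Sh}_\alpha(\mathrm{gr}(f))=\mathrm{gr}(\mathrm{Sh}_\alpha(f))$.
   Context: $\mathcal C_a$ is the set of $C^1$ functions $f:\mathbb R\to\mathbb R$ that are even, satisfy $f(s)=|s|$ for $|s|\ge a$ and are strictly convex on $[-a,a]$. Shaking of functions: for $f\in\mathcal C_a$ and $\alpha\in[0,1)$, put $F_\alpha(s)=f(s)-\alpha s$, $x_\alpha^+=(f')^{-1}(\alpha)\in[0,a)$ (inverse of $f':[-a,a]\to[-1,1]$); $F_\alpha$ decreases on $(-\infty,x_\alpha^+]$ and increases on $[x_\alpha^+,\infty)$. Let $F_\alpha^{-1}$ be the inverse of $F_\alpha|_{[x_\alpha^+,\infty)}$, $\phi=F_\alpha^{-1}\circ F_\alpha$, $\delta_x=(1-\alpha)^{-1}F_\alpha(x)-\phi(x)$, $s_\alpha=x_\alpha^++\delta_{x_\alpha^+}$; $x\mapsto x+\delta_x$ is an increasing bijection $(-\infty,x_\alpha^+]\to(-\infty,s_\alpha]$ with inverse $\tau$. Define $\mathrm{Sh}_\alpha(f)(x)=\alpha x+F_\alpha(\tau(x))$ for $x\le s_\alpha$ and $=x$ for $x>s_\alpha$. Graphs: let $\mathcal P$ be the set of continuous $g:\mathbb R\to\mathbb R$ with $g(x)\ge|x|$ for all $x$, $g(x)=|x|$ for $|x|$ large, and $g(x_0)\ne|x_0|$ for some $x_0$. For $g\in\mathcal P$ let $a_g=\inf\{x:g(x)\ne|x|\}$,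 $b_g=\sup\{x:g(x)\ne|x|\}$ and $\mathrm{gr}(g)=\{(x,y)\in[a_g,b_g]\times\mathbb R_{\ge0}:|x|\le y\le g(x)\}$ (both $f$ and $\mathrm{Sh}_\alpha(f)$ lie in $\mathcal P$). Shaking of sets: let $D$ be the line $y=-x$ and $v_\alpha$ the unit vector positively collinear to $(1,\alpha)$. For compact $K\subseteq\mathbb R^2$, $\mathrm{Sh}_\alpha(K)=\bigcup_{p\in D}K^p$, where $K^p=\emptyset$ if $K\cap(p+\mathbb Rv_\alpha)=\emptyset$ and otherwise $K^p$ is the segment from $p$ to $p+|K\cap(p+\mathbb Rv_\alpha)|\,v_\alpha$, $|\cdot|$ denoting one-dimensional Lebesgue measure on the line. *)

theory Defs
  imports "HOL-Analysis.Analysis"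
begin

definition strictly_convex_on :: "real set \<Rightarrow> (real \<Rightarrow> real) \<Rightarrow> bool" where
  "strictly_convex_on S f \<longleftrightarrow>
     (\<forall>x\<in>S. \<forall>y\<in>S. \<forall>t::real. x \<noteq> y \<and> 0 < t \<and> t < 1 \<longrightarrow>
        f (t * x + (1 - t) * y) < t * f x + (1 - t) * f y)"

definition classC :: "real \<Rightarrow> (real \<Rightarrow> real) \<Rightarrow> bool" where
  "classC a f \<longleftrightarrow> f C1_differentiable_on UNIV \<and> (\<forall>s. f (- s) = f s)
     \<and> (\<forall>s. \<bar>s\<bar> \<ge> a \<longrightarrow> f s = \<bar>s\<bar>) \<and> strictly_convex_on {-a..a} f"

definition shF :: "real \<Rightarrow> (real \<Rightarrow> real) \<Rightarrow> real \<Rightarrow> real" where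
  "shF \<alpha> f s = f s - \<alpha> * s"

definition xplus :: "real \<Rightarrow> real \<Rightarrow> (real \<Rightarrow> real) \<Rightarrow> real" where
  "xplus a \<alpha> f = (THE x. x \<in> {-a..a} \<and> deriv f x = \<alpha>)"

definition shFinv :: "real \<Rightarrow> real \<Rightarrow> (real \<Rightarrow> real) \<Rightarrow> real \<Rightarrow> real" where
  "shFinv a \<alpha> f y = (THE z. z \<ge> xplus a \<alpha> f \<and> shF \<alpha> f z = y)"

definition shPhi :: "real \<Rightarrow> real \<Rightarrow> (real \<Rightarrow> real) \<Rightarrow> real \<Rightarrow> real" where
  "shPhi a \<alpha> f x = shFinv a \<alpha> f (shF \<alpha> f x)"

definition shDelta :: "real \<Rightarrow> real \<Rightarrow> (real \<Rightarrow> real) \<Rightarrow> real \<Rightarrow> real" where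
  "shDelta a \<alpha> f x = shF \<alpha> f x / (1 - \<alpha>) - shPhi a \<alpha> f x"

definition shS :: "real \<Rightarrow> real \<Rightarrow> (real \<Rightarrow> real) \<Rightarrow> real" where
  "shS a \<alpha> f = xplus a \<alpha> f + shDelta a \<alpha> f (xplus a \<alpha> f)"

definition shTau :: "real \<Rightarrow> real \<Rightarrow> (real \<Rightarrow> real) \<Rightarrow> real \<Rightarrow> real" where
  "shTau a \<alpha> f y = (THE x. x \<le> xplus a \<alpha> f \<and> x + shDelta a \<alpha> f x = y)"

definition shake_fun :: "real \<Rightarrow> real \<Rightarrow> (real \<Rightarrow> real) \<Rightarrow> real \<Rightarrow> real" where
  "shake_fun a \<alpha> f x =
     (if x \<le> shS a \<alpha> f then \<alpha> * x + shF \<alpha> f (shTau a \<alpha> f x) else x)"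

definition a_of :: "(real \<Rightarrow> real) \<Rightarrow> real" where
  "a_of g = Inf {x. g x \<noteq> \<bar>x\<bar>}"

definition b_of :: "(real \<Rightarrow> real) \<Rightarrow> real" where
  "b_of g = Sup {x. g x \<noteq> \<bar>x\<bar>}"

definition gr :: "(real \<Rightarrow> real) \<Rightarrow> (real \<times> real) set" where
  "gr g = {(x, y). a_of g \<le> x \<and> x \<le> b_of g \<and> 0 \<le> y \<and> \<bar>x\<bar> \<le> y \<and> y \<le> g x}"

definition lineD :: "(real \<times> real) set" where
  "lineD = {(t, - t) | t. True}"

definition vdir :: "real \<Rightarrow> real \<times> real" where
  "vdir \<alpha> = (1 / norm ((1::real), \<alpha>)) *\<^sub>R (1, \<alpha>)"

definition Kslice :: "real \<Rightarrow> (real \<times> real) set \<Rightarrow> real \<times> real \<Rightarrow> (real \<times> real) set" where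
  "Kslice \<alpha> K p =
     (if K \<inter> {p + t *\<^sub>R vdir \<alpha> | t. True} = {} then {}
      else closed_segment p
             (p + measure lebesgue {t::real. p + t *\<^sub>R vdir \<alpha> \<in> K} *\<^sub>R vdir \<alpha>))"

definition shake_set :: "real \<Rightarrow> (real \<times> real) set \<Rightarrow> (real \<times> real) set" where
  "shake_set \<alpha> K = (\<Union>p\<in>lineD. Kslice \<alpha> K p)"

end

theory Submission
  imports Defs
begin



locale shk =
  fixes a \<alpha> :: real and f :: "real \<Rightarrow> real"
  assumes a_pos: "a > 0" and al0: "0 \<le> \<alpha>" and al1: "\<alpha> < 1" and cls: "classC a f"
begin

lemma f_even: "f (- s) = f s" using cls by (simp add: classC_def)
lemma f_out: "\<bar>s\<bar> \<ge> a \<Longrightarrow> f s = \<bar>s\<bar>" using cls by (simp add: classC_def)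
lemma f_sc: "strictly_convex_on {-a..a} f" using cls by (simp add: classC_def)

lemma f_C1: "\<exists>D. (\<forall>x. (f has_real_derivative D x) (at x)) \<and> continuous_on UNIV D"
  using cls unfolding classC_def C1_differentiable_on_def
  by (auto simp: has_real_derivative_iff_has_vector_derivative)

lemma fder: "(f has_real_derivative deriv f x) (at x)"
  using f_C1 by (metis DERIV_imp_deriv)

lemma fder_cont: "continuous_on UNIV (deriv f)"
proof -
  obtain D where D: "\<forall>x. (f has_real_derivative D x) (at x)" "continuous_on UNIV D" using f_C1 by blast
  have "deriv f = D" using D(1) by (auto intro!: ext DERIV_imp_deriv)
  thus ?thesis using D(2) by simp
qed

lemma f_cont: "continuous_on S f"
  using fder by (meson DERIV_continuous continuous_at_imp_continuous_on)

lemma f_isCont: "isCont f x"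
  using fder by (meson DERIV_continuous)

lemma deriv_right: "x > a \<Longrightarrow> deriv f x = 1"
proof -
  assume x: "x > a"
  have "((\<lambda>y. y) has_real_derivative 1) (at x)" by (rule DERIV_ident)
  hence "(f has_real_derivative 1) (at x)"
    apply (rule has_field_derivative_transform_within_open[where S="{a<..}"])
    using x a_pos by (auto simp: f_out)
  thus ?thesis by (rule DERIV_imp_deriv)
qed

lemma deriv_left: "x < -a \<Longrightarrow> deriv f x = -1"
proof -
  assume x: "x < -a"
  have "((\<lambda>y. -y) has_real_derivative -1) (at x)" by (auto intro!: derivative_eq_intros)
  hence "(f has_real_derivative -1) (at x)"
    apply (rule has_field_derivative_transform_within_open[where S="{..< -a}"])
    using x a_pos by (auto simp: f_out)
  thus ?thesis by (rule DERIV_imp_deriv)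
qed

lemma deriv_a: "deriv f a = 1"
proof -
  have "((\<lambda>y. (f y - f a) / (y - a)) \<longlongrightarrow> deriv f a) (at a within {a<..})"
    using fder[of a] unfolding has_field_derivative_iff by (blast intro: tendsto_mono at_le)
  moreover have "((\<lambda>y. (f y - f a) / (y - a)) \<longlongrightarrow> 1) (at a within {a<..})"
  proof (rule Lim_transform_within[OF tendsto_const, where d=1])
    fix y assume "y \<in> {a<..}" "0 < dist y a" "dist y a < 1"
    thus "1 = (f y - f a) / (y - a)" using a_pos by (simp add: f_out)
  qed simp
  ultimately show ?thesis
    using tendsto_unique[OF trivial_limit_at_right_real] by blast
qed

lemma deriv_ma: "deriv f (-a) = -1"
proof -
  have "((\<lambda>y. (f y - f (-a)) / (y - (-a))) \<longlongrightarrow> deriv f (-a)) (at (-a) within {..< -a})"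
    using fder[of "-a"] unfolding has_field_derivative_iff by (blast intro: tendsto_mono at_le)
  moreover have "((\<lambda>y. (f y - f (-a)) / (y - (-a))) \<longlongrightarrow> -1) (at (-a) within {..< -a})"
  proof (rule Lim_transform_within[OF tendsto_const, where d=1])
    fix y assume "y \<in> {..< -a}" "0 < dist y (-a)" "dist y (-a) < 1"
    thus "-1 = (f y - f (-a)) / (y - (-a))" using a_pos by (simp add: f_out field_simps)
  qed simp
  ultimately show ?thesis
    using tendsto_unique[OF trivial_limit_at_left_real] by blast
qed

end



lemma sc_imp_convex:
  assumes "strictly_convex_on {l..u} g"
  shows "convex_on {l..u} g"
proof (rule convex_on_linorderI)
  fix t x y :: real assume t: "t > 0" "t < 1" and xy: "x \<in> {l..u}" "y \<in> {l..u}" "x < y"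
  have H: "\<forall>x\<in>{l..u}. \<forall>y\<in>{l..u}. \<forall>t::real. x \<noteq> y \<and> 0 < t \<and> t < 1 \<longrightarrow>
        g (t * x + (1 - t) * y) < t * g x + (1 - t) * g y" using assms unfolding strictly_convex_on_def by simp
  have "g ((1 - t) * x + (1 - (1 - t)) * y) < (1 - t) * g x + (1 - (1 - t)) * g y"
    using H[rule_format, of x y "1-t"] xy t by simp
  thus "g ((1 - t) *\<^sub>R x + t *\<^sub>R y) \<le> (1 - t) * g x + t * g y" by simp
qed simp

lemma tangent_ineq:
  fixes g :: "real \<Rightarrow> real"
  assumes cv: "convex_on {l..u} g" and x: "x \<in> {l..u}" and y: "y \<in> {l..u}"
    and d: "(g has_real_derivative d) (at x)"
  shows "g y - g x \<ge> d * (y - x)"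
proof (cases y x rule: linorder_cases)
  case equal thus ?thesis by simp
next
  case greater
  have lim: "((\<lambda>z. (g z - g x) / (z - x)) \<longlongrightarrow> d) (at_right x)"
    using d unfolding has_field_derivative_iff by (blast intro: tendsto_mono at_le)
  have ev: "eventually (\<lambda>z. (g z - g x) / (z - x) \<le> (g y - g x) / (y - x)) (at_right x)"
    using eventually_at_right_real[OF greater]
  proof eventually_elim
    fix z assume z: "z \<in> {x<..<y}"
    have "convex_on {x..y} g" by (rule convex_on_subset[OF cv]) (use x y in auto)
    hence "g z \<le> (g y - g x) / (y - x) * (z - x) + g x"
      using z by (intro convex_onD_Icc') auto
    thus "(g z - g x) / (z - x) \<le> (g y - g x) / (y - x)" using z by (simp add: divide_simps algebra_simps)
  qed
  have "d \<le> (g y - g x) / (y - x)"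
    using tendsto_le[OF trivial_limit_at_right_real tendsto_const lim ev] .
  thus ?thesis using greater by (simp add: field_simps)
next
  case less
  have lim: "((\<lambda>z. (g z - g x) / (z - x)) \<longlongrightarrow> d) (at_left x)"
    using d unfolding has_field_derivative_iff by (blast intro: tendsto_mono at_le)
  have ev: "eventually (\<lambda>z. (g z - g x) / (z - x) \<ge> (g y - g x) / (y - x)) (at_left x)"
    using eventually_at_left_real[OF less]
  proof eventually_elim
    fix z assume z: "z \<in> {y<..<x}"
    have "convex_on {y..x} g" by (rule convex_on_subset[OF cv]) (use x y in auto)
    hence "g z \<le> (g y - g x) / (x - y) * (x - z) + g x"
      using z by (intro convex_onD_Icc'') auto
    hence "g z - g x \<le> (g y - g x) / (x - y) * (x - z)" by simp
    thus "(g z - g x) / (z - x) \<ge> (g y - g x) / (y - x)" using z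
      by (simp add: divide_simps) (simp add: algebra_simps)
  qed
  have "d \<ge> (g y - g x) / (y - x)"
    using tendsto_le[OF trivial_limit_at_left_real lim tendsto_const ev] .
  thus ?thesis using less by (simp add: field_simps)
qed

lemma tangent_strict:
  fixes g :: "real \<Rightarrow> real"
  assumes sc: "strictly_convex_on {l..u} g" and x: "x \<in> {l..u}" and y: "y \<in> {l..u}"
    and d: "(g has_real_derivative d) (at x)" and ne: "x \<noteq> y"
  shows "g y - g x > d * (y - x)"
proof -
  define z where "z = (1/2) * x + (1 - 1/2) * y"
  have H: "\<forall>x\<in>{l..u}. \<forall>y\<in>{l..u}. \<forall>t::real. x \<noteq> y \<and> 0 < t \<and> t < 1 \<longrightarrow>
        g (t * x + (1 - t) * y) < t * g x + (1 - t) * g y" using sc unfolding strictly_convex_on_def by simp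
  have "g z < (1/2) * g x + (1 - 1/2) * g y"
    unfolding z_def using H[rule_format, of x y "1/2"] x y ne by simp
  moreover have "z \<in> {l..u}" using x y unfolding z_def by auto
  hence "g z - g x \<ge> d * (z - x)"
    using tangent_ineq[OF sc_imp_convex[OF sc] x _ d] by blast
  ultimately show ?thesis unfolding z_def by (simp add: algebra_simps)
qed

context shk begin

lemma tangent_f: "x \<in> {-a..a} \<Longrightarrow> y \<in> {-a..a} \<Longrightarrow> x \<noteq> y \<Longrightarrow> f y - f x > deriv f x * (y - x)"
  by (rule tangent_strict[OF f_sc _ _ fder])

lemma deriv_strict_mono: "x \<in> {-a..a} \<Longrightarrow> y \<in> {-a..a} \<Longrightarrow> x < y \<Longrightarrow> deriv f x < deriv f y"
proof -
  assume xy: "x \<in> {-a..a}" "y \<in> {-a..a}" "x < y"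
  have "(deriv f x - deriv f y) * (y - x) < 0"
    using tangent_f[of x y] tangent_f[of y x] xy by (simp add: algebra_simps)
  thus ?thesis using xy by (simp add: mult_less_0_iff)
qed

lemma f_gt_abs: "\<bar>x\<bar> < a \<Longrightarrow> f x > \<bar>x\<bar>"
proof -
  assume x: "\<bar>x\<bar> < a"
  have xa: "-a \<le> x" "x \<le> a" "x \<noteq> a" "x \<noteq> -a" using x by auto
  have 1: "f x - f a > 1 * (x - a)" using tangent_f[of a x] deriv_a xa a_pos by simp
  have 2: "f x - f (-a) > (-1) * (x - (-a))" using tangent_f[of "-a" x] deriv_ma xa a_pos by simp
  have "f a = a" "f (-a) = a" using f_out[of a] f_out[of "-a"] a_pos by auto
  thus ?thesis using 1 2 by (simp add: abs_if)
qed

lemma f_ge_abs: "f x \<ge> \<bar>x\<bar>"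
  using f_gt_abs[of x] f_out[of x] by (cases "\<bar>x\<bar> < a") auto

lemma deriv_le1: "deriv f x \<le> 1"
proof -
  consider "x > a" | "x < -a" | "x \<in> {-a..a}" by force
  thus ?thesis
  proof cases
    case 3 thus ?thesis using deriv_strict_mono[of x a] deriv_a a_pos by (cases "x = a") auto
  qed (auto simp: deriv_right deriv_left)
qed

lemma deriv_ge_m1: "deriv f x \<ge> -1"
proof -
  consider "x > a" | "x < -a" | "x \<in> {-a..a}" by force
  thus ?thesis
  proof cases
    case 3 
    show ?thesis
    proof (cases "x = -a")
      case True thus ?thesis using deriv_ma by simp
    next
      case False thus ?thesis using deriv_strict_mono[of "-a" x] deriv_ma a_pos 3 by simp
    qed
  next
    case 1 thus ?thesis using deriv_right[of x] by simp
  next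
    case 2 thus ?thesis using deriv_left[of x] by simp
  qed
qed

end



context shk begin

abbreviation "F \<equiv> shF \<alpha> f"
abbreviation "xp \<equiv> xplus a \<alpha> f"

lemma F_eq: "F x = f x - \<alpha> * x" by (simp add: shF_def)

lemma F_der: "(F has_real_derivative deriv f x - \<alpha>) (at x)"
  unfolding shF_def[abs_def] by (auto intro!: derivative_eq_intros fder)

lemma F_cont: "continuous_on S F"
  unfolding shF_def[abs_def] by (auto intro!: continuous_intros f_cont)

lemma F_isCont: "isCont F x"
  unfolding shF_def[abs_def] by (auto intro!: continuous_intros f_isCont)

lemma F_right: "x \<ge> a \<Longrightarrow> F x = (1 - \<alpha>) * x"
  using f_out[of x] a_pos by (simp add: F_eq algebra_simps)

lemma F_left: "x \<le> -a \<Longrightarrow> F x = -(1 + \<alpha>) * x"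
  using f_out[of x] a_pos by (simp add: F_eq algebra_simps)

lemma F_low1: "F x \<ge> (1 - \<alpha>) * x"
  using f_ge_abs[of x] by (simp add: F_eq algebra_simps)

lemma F_low2: "F x \<ge> -(1 + \<alpha>) * x"
  using f_ge_abs[of x] by (simp add: F_eq algebra_simps)

lemma xp_ex: "\<exists>x. -a \<le> x \<and> x \<le> a \<and> deriv f x = \<alpha>"
  using IVT'[of "deriv f" "-a" \<alpha> a] deriv_a deriv_ma al0 al1 a_pos fder_cont
  by (auto intro: continuous_on_subset)

lemma xp_uniq: "x \<in> {-a..a} \<Longrightarrow> y \<in> {-a..a} \<Longrightarrow> deriv f x = \<alpha> \<Longrightarrow> deriv f y = \<alpha> \<Longrightarrow> x = y"
  using deriv_strict_mono[of x y] deriv_strict_mono[of y x] by (cases x y rule: linorder_cases) auto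

lemma xp_prop: "xp \<in> {-a..a} \<and> deriv f xp = \<alpha>"
proof -
  have "\<exists>!x. x \<in> {-a..a} \<and> deriv f x = \<alpha>" using xp_ex xp_uniq by auto
  thus ?thesis unfolding xplus_def by (rule theI')
qed

lemma xp_int: "-a < xp" "xp < a"
  using xp_prop deriv_a deriv_ma al0 al1 by (auto simp: less_le)

lemma F'_neg: "x < xp \<Longrightarrow> deriv f x - \<alpha> < 0"
proof -
  assume x: "x < xp"
  show ?thesis
  proof (cases "x < -a")
    case True thus ?thesis using deriv_left[of x] al0 by simp
  next
    case False thus ?thesis using deriv_strict_mono[of x xp] xp_prop x by auto
  qed
qed

lemma F'_pos: "x > xp \<Longrightarrow> deriv f x - \<alpha> > 0"
proof -
  assume x: "x > xp"
  show ?thesis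
  proof (cases "x > a")
    case True thus ?thesis using deriv_right[of x] al1 by simp
  next
    case False thus ?thesis using deriv_strict_mono[of xp x] xp_prop x by auto
  qed
qed

lemma F_dec: assumes "x < y" "y \<le> xp" shows "F x > F y"
proof (rule DERIV_neg_imp_decreasing_open[of x y F])
  show "x < y" by (rule assms)
  fix z assume "x < z" "z < y"
  thus "\<exists>d. (F has_real_derivative d) (at z) \<and> d < 0" using F_der[of z] F'_neg[of z] assms by auto
qed (rule F_cont)

lemma F_inc: assumes "xp \<le> x" "x < y" shows "F x < F y"
proof (rule DERIV_pos_imp_increasing_open[of x y F])
  show "x < y" by (rule assms)
  fix z assume "x < z" "z < y"
  thus "\<exists>d. (F has_real_derivative d) (at z) \<and> d > 0" using F_der[of z] F'_pos[of z] assms by auto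
qed (rule F_cont)

lemma F_dec_iff: "x \<le> xp \<Longrightarrow> y \<le> xp \<Longrightarrow> F x \<le> F y \<longleftrightarrow> y \<le> x"
  using F_dec[of x y] F_dec[of y x] by (cases x y rule: linorder_cases) auto

lemma F_inc_iff: "xp \<le> x \<Longrightarrow> xp \<le> y \<Longrightarrow> F x \<le> F y \<longleftrightarrow> x \<le> y"
  using F_inc[of x y] F_inc[of y x] by (cases x y rule: linorder_cases) auto

lemma F_ge_m: "F x \<ge> F xp"
  using F_dec[of x xp] F_inc[of xp x] by (cases x xp rule: linorder_cases) auto

lemma xp_nonneg: "0 \<le> xp"
proof (rule ccontr)
  assume "\<not> 0 \<le> xp"
  hence n: "xp < 0" by simp
  have "F (-xp) > F xp" using F_inc[of xp "-xp"] n by simp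
  moreover have "F (-xp) \<le> F xp" using n al0 f_even[of xp] by (simp add: F_eq mult_nonneg_nonpos)
  ultimately show False by simp
qed

lemma m_gt: "F xp > (1 - \<alpha>) * xp"
  using f_gt_abs[of xp] xp_int xp_nonneg by (simp add: F_eq algebra_simps)

lemma m_pos: "F xp > 0"
proof -
  have "(1 - \<alpha>) * xp \<ge> 0" using al1 xp_nonneg by simp
  thus ?thesis using m_gt by linarith
qed

lemma slope_le: "x \<le> y \<Longrightarrow> F y - F x \<le> (1 - \<alpha>) * (y - x)"
proof -
  assume xy: "x \<le> y"
  have "(\<lambda>z. f z - z) x \<ge> (\<lambda>z. f z - z) y"
  proof (rule DERIV_nonpos_imp_nonincreasing[OF xy])
    fix z show "\<exists>d. ((\<lambda>z. f z - z) has_real_derivative d) (at z) \<and> d \<le> 0"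
      using deriv_le1[of z] by (auto intro!: derivative_eq_intros fder)
  qed
  thus ?thesis by (simp add: F_eq algebra_simps)
qed

end



context shk begin

abbreviation "r \<equiv> shFinv a \<alpha> f"
abbreviation "h \<equiv> \<lambda>x. x + shDelta a \<alpha> f x"
abbreviation "s \<equiv> shS a \<alpha> f"
abbreviation "tau \<equiv> shTau a \<alpha> f"

lemma r_ex1: assumes "c \<ge> F xp" shows "\<exists>!z. xp \<le> z \<and> F z = c"
proof -
  have 1: "F (c / (1 - \<alpha>)) \<ge> c" using F_low1[of "c / (1 - \<alpha>)"] al1 by simp
  have 2: "xp \<le> c / (1 - \<alpha>)" using m_gt assms al1 by (simp add: pos_le_divide_eq algebra_simps)
  obtain z where "xp \<le> z" "F z = c"
    using IVT'[of F xp c "c / (1 - \<alpha>)"] 1 2 assms F_cont by auto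
  note z = this
  show ?thesis
  proof (rule ex1I[of _ z])
    show "xp \<le> z \<and> F z = c" using z by simp
    fix w assume w: "xp \<le> w \<and> F w = c"
    have e: "F w = F z" using w z by simp
    have "w \<le> z" using F_inc_iff[of w z] w z(1) e by linarith
    moreover have "z \<le> w" using F_inc_iff[of z w] w z(1) e by linarith
    ultimately show "w = z" by (rule antisym)
  qed
qed

lemma r_prop: "c \<ge> F xp \<Longrightarrow> xp \<le> r c \<and> F (r c) = c"
  unfolding shFinv_def by (rule theI', erule r_ex1)

lemma r_F: "xp \<le> z \<Longrightarrow> r (F z) = z"
  unfolding shFinv_def by (rule the1_equality) (use r_ex1 F_ge_m in auto)

lemma r_le: assumes "c \<ge> F xp" shows "r c \<le> c / (1 - \<alpha>)"
proof -
  have 1: "F (c / (1 - \<alpha>)) \<ge> c" using F_low1[of "c / (1 - \<alpha>)"] al1 by simp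
  have 2: "xp \<le> c / (1 - \<alpha>)" using m_gt assms al1 by (simp add: pos_le_divide_eq algebra_simps)
  show ?thesis using F_inc_iff[of "r c" "c / (1 - \<alpha>)"] r_prop[OF assms] 1 2 by simp
qed

lemma r_a: assumes "c \<ge> (1 - \<alpha>) * a" shows "r c = c / (1 - \<alpha>)"
proof -
  have 1: "c / (1 - \<alpha>) \<ge> a" using assms al1 by (simp add: pos_le_divide_eq mult.commute)
  hence "F (c / (1 - \<alpha>)) = c" using F_right al1 by simp
  moreover have "xp \<le> c / (1 - \<alpha>)" using 1 xp_int by simp
  ultimately show ?thesis using r_F by metis
qed

lemma h_eq: "h x = x + F x / (1 - \<alpha>) - r (F x)"
  by (simp add: shDelta_def shPhi_def)

lemma h_left: assumes "x \<le> -a" shows "h x = x"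
proof -
  have "F x = -(1 + \<alpha>) * x" using F_left[OF assms] .
  moreover have "-(1 + \<alpha>) * x \<ge> (1 - \<alpha>) * a"
  proof -
    have "(1 + \<alpha>) * a \<le> (1 + \<alpha>) * (-x)" by (rule mult_left_mono) (use assms al0 in auto)
    moreover have "(1 - \<alpha>) * a \<le> (1 + \<alpha>) * a" by (rule mult_right_mono) (use al0 a_pos in auto)
    moreover have "(- 1 - \<alpha>) * x = -((1 + \<alpha>) * x)" by (simp add: algebra_simps)
    ultimately show ?thesis by linarith
  qed
  ultimately show ?thesis using r_a h_eq by simp
qed

lemma s_eq: "s = F xp / (1 - \<alpha>)"
  unfolding shS_def using h_eq[of xp] r_F[of xp] by simp

lemma s_pos: "s > 0" using s_eq m_pos al1 by simp

lemma s_gt_xp: "s > xp" using s_eq m_gt al1 by (simp add: pos_less_divide_eq algebra_simps)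

lemma h_mono: assumes "x1 < x2" "x2 \<le> xp" shows "h x2 - h x1 \<ge> x2 - x1"
proof -
  define c1 c2 where "c1 = F x1" and "c2 = F x2"
  have c: "c1 > c2" "c2 \<ge> F xp" using F_dec[OF assms] F_ge_m unfolding c1_def c2_def by auto
  have r1: "xp \<le> r c1" "F (r c1) = c1" and r2: "xp \<le> r c2" "F (r c2) = c2"
    using r_prop c by auto
  have "r c2 \<le> r c1" using F_inc_iff[of "r c2" "r c1"] r1 r2 c by simp
  hence "c1 - c2 \<le> (1 - \<alpha>) * (r c1 - r c2)" using slope_le[of "r c2" "r c1"] r1 r2 by simp
  hence "(c1 - c2) / (1 - \<alpha>) \<le> r c1 - r c2" using al1 by (simp add: pos_divide_le_eq mult.commute)
  thus ?thesis unfolding h_eq c1_def[symmetric] c2_def[symmetric] using al1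
    by (simp add: diff_divide_distrib)
qed

lemma h_strict: "x1 < x2 \<Longrightarrow> x2 \<le> xp \<Longrightarrow> h x1 < h x2"
  using h_mono by fastforce

lemma h_le_iff: "x1 \<le> xp \<Longrightarrow> x2 \<le> xp \<Longrightarrow> h x1 \<le> h x2 \<longleftrightarrow> x1 \<le> x2"
  using h_strict[of x1 x2] h_strict[of x2 x1] by (cases x1 x2 rule: linorder_cases) auto

lemma F_image: assumes "xp \<le> B" shows "F ` {xp..B} = {F xp..F B}"
proof
  show "F ` {xp..B} \<subseteq> {F xp..F B}" using F_inc_iff by auto
  show "{F xp..F B} \<subseteq> F ` {xp..B}"
  proof
    fix c assume "c \<in> {F xp..F B}"
    then obtain z where "xp \<le> z" "z \<le> B" "F z = c"
      using IVT'[of F xp c B] assms F_cont by auto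
    thus "c \<in> F ` {xp..B}" by auto
  qed
qed

lemma r_cont: assumes "xp \<le> B" shows "continuous_on {F xp..F B} r"
proof -
  have "continuous_on (F ` {xp..B}) r"
    by (rule continuous_on_inv) (auto simp: F_cont r_F)
  thus ?thesis using F_image[OF assms] by simp
qed

lemma h_cont: assumes "z \<le> xp" shows "continuous_on {z..xp} h"
proof -
  define B where "B = max xp (F z / (1 - \<alpha>))"
  have B: "xp \<le> B" unfolding B_def by simp
  have "F B \<ge> (1 - \<alpha>) * B" by (rule F_low1)
  moreover have "(1 - \<alpha>) * B \<ge> (1 - \<alpha>) * (F z / (1 - \<alpha>))"
    by (rule mult_left_mono) (use al1 in \<open>auto simp: B_def\<close>)
  hence "(1 - \<alpha>) * B \<ge> F z" using al1 by simp
  ultimately have FB: "F B \<ge> F z" by simp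
  have "continuous_on {z..xp} (\<lambda>x. r (F x))"
  proof (rule continuous_on_compose2[OF r_cont[OF B] F_cont])
    show "F ` {z..xp} \<subseteq> {F xp..F B}"
    proof
      fix w assume "w \<in> F ` {z..xp}"
      then obtain x where x: "z \<le> x" "x \<le> xp" "w = F x" by auto
      have "F x \<le> F z" using F_dec_iff[of x z] x assms by simp
      thus "w \<in> {F xp..F B}" using F_ge_m[of x] FB x by simp
    qed
  qed
  hence "continuous_on {z..xp} (\<lambda>x. x + F x / (1 - \<alpha>) - r (F x))"
    using al1 by (auto intro!: continuous_intros F_cont)
  thus ?thesis using h_eq by (simp add: add_diff_eq)
qed

lemma tau_ex1: assumes "y \<le> s" shows "\<exists>!x. x \<le> xp \<and> h x = y"
proof -
  define z where "z = min y (-a)"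
  have z: "z \<le> xp" "h z \<le> y" using h_left[of z] xp_int unfolding z_def by auto
  have hx: "h xp = s" unfolding shS_def by simp
  have "\<exists>x\<ge>z. x \<le> xp \<and> h x = y"
    using IVT'[of h z y xp, OF z(2) _ z(1) h_cont[OF z(1)]] assms hx by simp
  then obtain x where x: "z \<le> x" "x \<le> xp" "h x = y" by blast
  show ?thesis
  proof (rule ex1I[of _ x])
    show "x \<le> xp \<and> h x = y" using x by simp
    fix w assume w: "w \<le> xp \<and> h w = y"
    have e: "h w = h x" using w x by simp
    have "w \<le> x" using h_le_iff[of w x] w x(2) e by linarith
    moreover have "x \<le> w" using h_le_iff[of x w] w x(2) e by linarith
    ultimately show "w = x" by (rule antisym)
  qed
qed

lemma tau_prop: "y \<le> s \<Longrightarrow> tau y \<le> xp \<and> h (tau y) = y"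
  unfolding shTau_def by (rule theI', erule tau_ex1)

lemma h_le_s: "x \<le> xp \<Longrightarrow> h x \<le> s"
  using h_le_iff[of x xp] unfolding shS_def by simp

lemma tau_h: "x \<le> xp \<Longrightarrow> tau (h x) = x"
proof -
  assume x: "x \<le> xp"
  show ?thesis unfolding shTau_def
    by (rule the1_equality[OF tau_ex1[OF h_le_s[OF x]]]) (use x in simp)
qed

abbreviation "g \<equiv> shake_fun a \<alpha> f"

lemma g_le: "x \<le> s \<Longrightarrow> g x = \<alpha> * x + F (tau x)"
  by (simp add: shake_fun_def)

lemma g_gt: "x > s \<Longrightarrow> g x = x"
  by (simp add: shake_fun_def)

end



lemma meas_Icc_lebesgue: "A \<le> B \<Longrightarrow> measure lebesgue {A..B::real} = B - A"
  by (simp add: measure_completion)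

lemma meas_two:
  fixes A B C D N u :: real
  assumes N: "N > 0" and AB: "A \<le> B" and BC: "B < C"
  shows "measure lebesgue {t. u + t / N \<in> {A..B} \<union> {C..D}} = N * (B - A) + N * max 0 (D - C)"
proof -
  have eq: "\<And>P Q. {t. u + t / N \<in> {P..Q}} = {N * (P - u)..N * (Q - u)}"
    using N by (auto simp: field_simps)
  have s: "{t. u + t / N \<in> {A..B} \<union> {C..D}} = {N * (A - u)..N * (B - u)} \<union> {N * (C - u)..N * (D - u)}"
    using eq by blast
  have disj: "{N * (A - u)..N * (B - u)} \<inter> {N * (C - u)..N * (D - u)} = {}"
    using N BC by (auto simp: mult_less_cancel_left_pos)
  have "measure lborel ({N * (A - u)..N * (B - u)} \<union> {N * (C - u)..N * (D - u)})
        = measure lborel {N * (A - u)..N * (B - u)} + measure lborel {N * (C - u)..N * (D - u)}"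
    by (rule measure_Union) (use disj in \<open>auto simp: emeasure_lborel_Icc_eq\<close>)
  moreover have "measure lborel {N * (A - u)..N * (B - u)} = N * (B - A)"
    using N AB by (simp add: algebra_simps)
  moreover have "measure lborel {N * (C - u)..N * (D - u)} = N * max 0 (D - C)"
  proof (cases "C \<le> D")
    case True thus ?thesis using N by (simp add: algebra_simps)
  next
    case False
    hence "N * (D - u) < N * (C - u)" using N by simp
    thus ?thesis using False by simp
  qed
  ultimately show ?thesis unfolding s by (simp add: measure_completion)
qed




lemma abs_le_line:
  fixes x c \<alpha> :: real
  assumes "0 \<le> \<alpha>" "\<alpha> < 1"
  shows "\<bar>x\<bar> \<le> \<alpha> * x + c \<longleftrightarrow> -c / (1 + \<alpha>) \<le> x \<and> x \<le> c / (1 - \<alpha>)"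
proof -
  have p: "1 + \<alpha> > 0" using assms by simp
  have 1: "-c / (1 + \<alpha>) \<le> x \<longleftrightarrow> -c \<le> (1 + \<alpha>) * x"
    using pos_divide_le_eq[OF p, of "-c" x] by (simp add: mult.commute)
  have 2: "x \<le> c / (1 - \<alpha>) \<longleftrightarrow> (1 - \<alpha>) * x \<le> c"
    using assms by (simp add: pos_le_divide_eq mult.commute)
  show ?thesis unfolding 1 2 by (auto simp: abs_le_iff algebra_simps)
qed

context shk begin

lemma abf_set: "{x. f x \<noteq> \<bar>x\<bar>} = {-a<..<a}"
proof -
  have H: "f x \<noteq> \<bar>x\<bar> \<longleftrightarrow> -a < x \<and> x < a" for x
    using f_gt_abs[of x] f_out[of x] by (cases "\<bar>x\<bar> < a") auto
  show ?thesis
  proof (rule set_eqI)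
    fix x show "x \<in> {x. f x \<noteq> \<bar>x\<bar>} \<longleftrightarrow> x \<in> {-a<..<a}" using H[of x] by simp
  qed
qed

lemma abf: "a_of f = -a" "b_of f = a"
  unfolding a_of_def b_of_def abf_set using a_pos by auto

lemma gr_f_mem: "(x, \<alpha> * x + c) \<in> gr f \<longleftrightarrow>
    -a \<le> x \<and> x \<le> a \<and> -c / (1 + \<alpha>) \<le> x \<and> x \<le> c / (1 - \<alpha>) \<and> c \<le> F x"
proof -
  have 3: "\<bar>x\<bar> \<le> \<alpha> * x + c \<Longrightarrow> 0 \<le> \<alpha> * x + c" by linarith
  have e: "\<bar>x\<bar> \<le> \<alpha> * x + c \<longleftrightarrow> -c / (1 + \<alpha>) \<le> x \<and> x \<le> c / (1 - \<alpha>)"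
    by (rule abs_le_line[OF al0 al1])
  have 1: "(x, \<alpha> * x + c) \<in> gr f \<longleftrightarrow> -a \<le> x \<and> x \<le> a \<and> 0 \<le> \<alpha> * x + c \<and> \<bar>x\<bar> \<le> \<alpha> * x + c \<and> \<alpha> * x + c \<le> f x"
    unfolding gr_def abf by simp
  have 2: "\<alpha> * x + c \<le> f x \<longleftrightarrow> c \<le> F x" by (simp add: F_eq algebra_simps)
  show ?thesis using 1 2 3 e by blast
qed

lemma h_xp: "h xp = s" by (simp add: shS_def)

lemma tau_s: "tau s = xp" using tau_h[of xp] h_xp by simp

lemma g_left: assumes "x \<le> -a" shows "g x = \<bar>x\<bar>"
proof -
  have xs: "x \<le> s" using assms s_pos a_pos by simp
  have "tau x = x" using tau_h[of x] h_left[OF assms] assms xp_int by simp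
  thus ?thesis using g_le[OF xs] F_left[OF assms] assms a_pos by (simp add: algebra_simps)
qed

lemma g_right: assumes "x \<ge> s" shows "g x = \<bar>x\<bar>"
proof (cases "x = s")
  case True
  have "g s = \<alpha> * s + F xp" using g_le[of s] tau_s by simp
  also have "F xp = (1 - \<alpha>) * s" using s_eq al1 by simp
  finally show ?thesis using True s_pos by (simp add: algebra_simps)
next
  case False thus ?thesis using g_gt[of x] assms s_pos by simp
qed

lemma g_mid: assumes "-a < x" "x < s" shows "g x > \<bar>x\<bar>"
proof -
  define z where "z = tau x"
  have z: "z \<le> xp" "h z = x" using tau_prop[of x] assms unfolding z_def by auto
  have za: "-a < z"
  proof (rule ccontr)
    assume "\<not> -a < z" hence "z \<le> -a" by simp
    hence "h z = z" by (rule h_left)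
    thus False using z assms \<open>z \<le> -a\<close> by simp
  qed
  have zxp: "z < xp" using z h_xp assms by (cases "z = xp") auto
  define c where "c = F z"
  have cm: "c > F xp" using F_dec[OF zxp] unfolding c_def by simp
  have gx: "g x = \<alpha> * x + c" using g_le[of x] assms unfolding c_def z_def by simp
  have rc: "xp \<le> r c" "r c \<le> c / (1 - \<alpha>)" using r_prop[of c] r_le[of c] cm by auto
  have hx: "x = z + c / (1 - \<alpha>) - r c" using z(2) h_eq[of z] unfolding c_def by simp
  have x1: "x < c / (1 - \<alpha>)" using hx rc zxp by simp
  have lo: "-c / (1 + \<alpha>) < z"
  proof (cases "-c / (1 + \<alpha>) \<le> -a")
    case True thus ?thesis using za by simp
  next
    case False
    define lo where "lo = -c / (1 + \<alpha>)"
    have c0: "c > 0" using cm m_pos by simp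
    have lo0: "lo \<le> 0" unfolding lo_def using c0 al0 by simp
    have la: "-a < lo" using False unfolding lo_def by simp
    have "\<bar>lo\<bar> < a" using la lo0 by (simp add: abs_if)
    hence "f lo > \<bar>lo\<bar>" by (rule f_gt_abs)
    hence "F lo > -(1 + \<alpha>) * lo" using lo0 by (simp add: F_eq algebra_simps)
    also have "-(1 + \<alpha>) * lo = c"
    proof -
      have "1 + \<alpha> \<noteq> 0" using al0 by simp
      thus ?thesis unfolding lo_def by (simp add: field_simps)
    qed
    finally have "F lo > F z" unfolding c_def by simp
    hence "lo < z" using F_dec_iff[of lo z] lo0 xp_nonneg z(1) by linarith
    thus ?thesis unfolding lo_def .
  qed
  have x2: "-c / (1 + \<alpha>) < x" using hx rc lo by simp
  have "\<bar>x\<bar> < \<alpha> * x + c"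
  proof -
    have "\<bar>x\<bar> \<le> \<alpha> * x + c" using abs_le_line[OF al0 al1] x1 x2 by simp
    moreover have "\<bar>x\<bar> \<noteq> \<alpha> * x + c"
    proof
      assume e: "\<bar>x\<bar> = \<alpha> * x + c"
      show False
      proof (cases "x \<ge> 0")
        case True
        hence "(1 - \<alpha>) * x = c" using e by (simp add: algebra_simps)
        hence "x = c / (1 - \<alpha>)" using al1 by (simp add: field_simps)
        thus False using x1 by simp
      next
        case False
        hence "-(1 + \<alpha>) * x = c" using e by (simp add: algebra_simps)
        hence "x = -c / (1 + \<alpha>)" using al0 by (simp add: field_simps)
        thus False using x2 by simp
      qed
    qed
    ultimately show ?thesis by simp
  qed
  thus ?thesis using gx by simp
qed

lemma abg_set: "{x. g x \<noteq> \<bar>x\<bar>} = {-a<..<s}"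
proof -
  have "g x \<noteq> \<bar>x\<bar> \<longleftrightarrow> -a < x \<and> x < s" for x
  proof (cases "x \<le> -a")
    case True thus ?thesis using g_left by simp
  next
    case False
    show ?thesis
    proof (cases "x \<ge> s")
      case True thus ?thesis using g_right by simp
    next
      case False2: False
      thus ?thesis using g_mid[of x] False by simp
    qed
  qed
  note H = this
  show ?thesis
  proof (rule set_eqI)
    fix x show "x \<in> {x. g x \<noteq> \<bar>x\<bar>} \<longleftrightarrow> x \<in> {-a<..<s}" using H[of x] by simp
  qed
qed

lemma abg: "a_of g = -a" "b_of g = s"
  unfolding a_of_def b_of_def abg_set using a_pos s_pos by auto

lemma G_ge_m: "g x - \<alpha> * x \<ge> F xp"
proof (cases "x \<le> s")
  case True thus ?thesis using g_le F_ge_m by simp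
next
  case False
  hence "F xp / (1 - \<alpha>) < x" using s_eq by simp
  hence "F xp < x * (1 - \<alpha>)" using al1 by (simp add: pos_divide_less_eq)
  thus ?thesis using g_gt[of x] False by (simp add: algebra_simps)
qed

lemma gr_g_mem: "(x, y) \<in> gr g \<longleftrightarrow> -a \<le> x \<and> x \<le> s \<and> \<bar>x\<bar> \<le> y \<and> y \<le> g x"
  unfolding gr_def abg by auto

end



context shk begin

definition lft where "lft c = (THE z. z \<le> xp \<and> F z = c)"
definition Sx where "Sx c = {x. (x, \<alpha> * x + c) \<in> gr f}"
definition E where "E c = (if c \<le> F xp then c / (1 - \<alpha>) else h (lft c))"

lemma Fma: "F (-a) = (1 + \<alpha>) * a" "F a = (1 - \<alpha>) * a"
  using F_left[of "-a"] F_right[of a] a_pos by (auto simp: algebra_simps)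

lemma m_le: "F xp \<le> (1 + \<alpha>) * a" "F xp \<le> (1 - \<alpha>) * a"
  using F_ge_m[of "-a"] F_ge_m[of a] Fma by auto

lemma F_le_box: assumes "-a \<le> x" "x \<le> a" shows "F x \<le> (1 + \<alpha>) * a"
proof (cases "x \<le> xp")
  case True
  hence "F x \<le> F (-a)" using F_dec_iff[of x "-a"] assms xp_int by simp
  thus ?thesis using Fma by simp
next
  case False
  hence "F x \<le> F a" using F_inc_iff[of x a] assms xp_int by simp
  thus ?thesis using Fma al0 a_pos by (smt (verit) mult_right_mono)
qed

lemma lo_eq: "-(1 + \<alpha>) * (-c / (1 + \<alpha>)) = c"
proof -
  have "1 + \<alpha> \<noteq> 0" using al0 by simp
  thus ?thesis by (simp add: field_simps)
qed

lemma lo_le: "-a \<le> -c / (1 + \<alpha>) \<longleftrightarrow> c \<le> (1 + \<alpha>) * a"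
proof -
  have p: "1 + \<alpha> > 0" using al0 by simp
  have "-a \<le> -c / (1 + \<alpha>) \<longleftrightarrow> -a * (1 + \<alpha>) \<le> -c"
    by (rule pos_le_divide_eq[OF p])
  thus ?thesis by (simp add: algebra_simps)
qed

lemma hi_le: "c / (1 - \<alpha>) \<le> a \<longleftrightarrow> c \<le> (1 - \<alpha>) * a"
proof -
  have p: "1 - \<alpha> > 0" using al1 by simp
  show ?thesis using pos_divide_le_eq[OF p, of c a] by (simp add: mult.commute)
qed

lemma lo_nonpos: "0 \<le> c \<Longrightarrow> -c / (1 + \<alpha>) \<le> 0" using al0 by simp
lemma hi_nonneg: "0 \<le> c \<Longrightarrow> 0 \<le> c / (1 - \<alpha>)" using al1 by simp

lemma c_nonneg: assumes "-c / (1 + \<alpha>) \<le> c / (1 - \<alpha>)" shows "0 \<le> c"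
proof (rule ccontr)
  assume "\<not> 0 \<le> c"
  hence "c < 0" by simp
  hence "-c / (1 + \<alpha>) > 0" "c / (1 - \<alpha>) < 0" using al0 al1 by (auto simp: divide_neg_pos)
  thus False using assms by simp
qed

lemma Sx_mem: "x \<in> Sx c \<longleftrightarrow> -a \<le> x \<and> x \<le> a \<and> -c / (1 + \<alpha>) \<le> x \<and> x \<le> c / (1 - \<alpha>) \<and> c \<le> F x"
  unfolding Sx_def using gr_f_mem by simp

lemma Sx_ne: "Sx c \<noteq> {} \<longleftrightarrow> 0 \<le> c \<and> c \<le> (1 + \<alpha>) * a"
proof
  assume "Sx c \<noteq> {}"
  then obtain x where x: "x \<in> Sx c" by blast
  hence "0 \<le> c" using c_nonneg Sx_mem by force
  moreover have "c \<le> (1 + \<alpha>) * a" using x Sx_mem F_le_box[of x] by force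
  ultimately show "0 \<le> c \<and> c \<le> (1 + \<alpha>) * a" by simp
next
  assume c: "0 \<le> c \<and> c \<le> (1 + \<alpha>) * a"
  have "-c / (1 + \<alpha>) \<in> Sx c"
    unfolding Sx_mem using c lo_le[of c] lo_nonpos[of c] hi_nonneg[of c] a_pos
      F_low2[of "-c / (1 + \<alpha>)"] lo_eq[of c] by simp
  thus "Sx c \<noteq> {}" by blast
qed

lemma lft_ex1: assumes "F xp \<le> c" shows "\<exists>!z. z \<le> xp \<and> F z = c"
proof -
  have c0: "0 \<le> c" using assms m_pos by simp
  have lo: "-c / (1 + \<alpha>) \<le> xp" using lo_nonpos[OF c0] xp_nonneg by simp
  have Flo: "c \<le> F (-c / (1 + \<alpha>))" using F_low2[of "-c / (1 + \<alpha>)"] lo_eq[of c] by simp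
  obtain z where z: "-c / (1 + \<alpha>) \<le> z" "z \<le> xp" "F z = c"
    using IVT2'[of F xp c "-c / (1 + \<alpha>)", OF assms Flo lo F_cont] by blast
  show ?thesis
  proof (rule ex1I[of _ z])
    show "z \<le> xp \<and> F z = c" using z by simp
    fix w assume w: "w \<le> xp \<and> F w = c"
    have e: "F w = F z" using w z by simp
    have "w \<le> z" using F_dec_iff[of z w] w z(2) e by linarith
    moreover have "z \<le> w" using F_dec_iff[of w z] w z(2) e by linarith
    ultimately show "w = z" by (rule antisym)
  qed
qed

lemma lft_prop: "F xp \<le> c \<Longrightarrow> lft c \<le> xp \<and> F (lft c) = c"
  unfolding lft_def by (rule theI', erule lft_ex1)

lemma Sx_small: assumes "0 \<le> c" "c \<le> F xp" shows "Sx c = {-c / (1 + \<alpha>)..c / (1 - \<alpha>)}"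
proof -
  have 1: "-a \<le> -c / (1 + \<alpha>)" using lo_le[of c] assms m_le by simp
  have 2: "c / (1 - \<alpha>) \<le> a" using hi_le[of c] assms m_le by simp
  have 3: "c \<le> F x" for x using assms F_ge_m[of x] by simp
  show ?thesis
  proof (rule set_eqI)
    fix x show "x \<in> Sx c \<longleftrightarrow> x \<in> {-c / (1 + \<alpha>)..c / (1 - \<alpha>)}"
      unfolding Sx_mem using 1 2 3[of x] by auto
  qed
qed

end



context shk begin

lemma big_facts: assumes c1: "F xp < c" and c2: "c \<le> (1 + \<alpha>) * a"
  shows "-c / (1 + \<alpha>) \<le> lft c" "lft c < r c"
    "Sx c = {-c / (1 + \<alpha>)..lft c} \<union> {r c..min (c / (1 - \<alpha>)) a}"
proof -
  define l lo hi where "l = lft c" and "lo = -c / (1 + \<alpha>)" and "hi = c / (1 - \<alpha>)"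
  have c0: "0 \<le> c" using c1 m_pos by simp
  have l: "l \<le> xp" "F l = c" using lft_prop[of c] c1 unfolding l_def by auto
  have rc: "xp \<le> r c" "F (r c) = c" "r c \<le> hi" using r_prop[of c] r_le[of c] c1 unfolding hi_def by auto
  have lo0: "lo \<le> 0" using lo_nonpos[OF c0] unfolding lo_def .
  have loa: "-a \<le> lo" using lo_le[of c] c2 unfolding lo_def by simp
  have Flo: "c \<le> F lo" using F_low2[of lo] lo_eq[of c] unfolding lo_def by simp
  have lol: "lo \<le> l" using F_dec_iff[of l lo] l lo0 xp_nonneg Flo by simp
  thus "-c / (1 + \<alpha>) \<le> lft c" unfolding lo_def l_def .
  have "l \<noteq> r c"
  proof
    assume "l = r c"
    hence "l = xp" using l rc by simp
    thus False using l c1 by simp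
  qed
  thus "lft c < r c" using l rc unfolding l_def by simp
  show "Sx c = {-c / (1 + \<alpha>)..lft c} \<union> {r c..min (c / (1 - \<alpha>)) a}"
    unfolding lo_def[symmetric] hi_def[symmetric] l_def[symmetric]
  proof (rule set_eqI)
    fix x
    have mem: "x \<in> Sx c \<longleftrightarrow> -a \<le> x \<and> x \<le> a \<and> lo \<le> x \<and> x \<le> hi \<and> c \<le> F x"
      unfolding Sx_mem lo_def hi_def ..
    show "x \<in> Sx c \<longleftrightarrow> x \<in> {lo..l} \<union> {r c..min hi a}"
    proof
      assume x: "x \<in> Sx c"
      show "x \<in> {lo..l} \<union> {r c..min hi a}"
      proof (cases "x \<le> xp")
        case True
        hence "x \<le> l" using F_dec_iff[of l x] l x mem by simp
        thus ?thesis using x mem by simp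
      next
        case False
        hence "r c \<le> x" using F_inc_iff[of "r c" x] rc x mem by simp
        thus ?thesis using x mem by simp
      qed
    next
      assume x: "x \<in> {lo..l} \<union> {r c..min hi a}"
      show "x \<in> Sx c"
      proof (cases "x \<in> {lo..l}")
        case True
        have "F l \<le> F x" using F_dec_iff[of l x] True l by simp
        thus ?thesis unfolding mem using True loa l xp_int rc by auto
      next
        case False
        hence x2: "r c \<le> x" "x \<le> hi" "x \<le> a" using x by auto
        have "F (r c) \<le> F x" using F_inc_iff[of "r c" x] x2 rc by simp
        thus ?thesis unfolding mem using x2 rc lo0 xp_nonneg xp_int by auto
      qed
    qed
  qed
qed

lemma E_big: assumes "F xp < c" shows "E c = lft c + c / (1 - \<alpha>) - r c"
  using assms lft_prop[of c] h_eq[of "lft c"] unfolding E_def by simp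

lemma meas_Sx: assumes N: "N > 0" and ne: "Sx c \<noteq> {}"
  shows "measure lebesgue {t. u + t / N \<in> Sx c} = N * (E c - (-c / (1 + \<alpha>)))"
proof -
  have c: "0 \<le> c" "c \<le> (1 + \<alpha>) * a" using ne Sx_ne by auto
  show ?thesis
  proof (cases "c \<le> F xp")
    case True
    define lo hi where "lo = -c / (1 + \<alpha>)" and "hi = c / (1 - \<alpha>)"
    have "lo \<le> hi" using lo_nonpos[OF c(1)] hi_nonneg[OF c(1)] unfolding lo_def hi_def by simp
    have "Sx c = {lo..hi} \<union> {hi + 1..hi}" using Sx_small[OF c(1) True] unfolding lo_def hi_def by simp
    hence "measure lebesgue {t. u + t / N \<in> Sx c} = N * (hi - lo) + N * max 0 (hi - (hi + 1))"
      using meas_two[OF N \<open>lo \<le> hi\<close>, of "hi + 1" u hi] by simp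
    also have "\<dots> = N * (E c - lo)" using True unfolding E_def hi_def by simp
    finally show ?thesis unfolding lo_def .
  next
    case False
    hence c1: "F xp < c" by simp
    define lo hi where "lo = -c / (1 + \<alpha>)" and "hi = c / (1 - \<alpha>)"
    note bf = big_facts[OF c1 c(2), folded lo_def hi_def]
    have "measure lebesgue {t. u + t / N \<in> Sx c} = N * (lft c - lo) + N * max 0 (min hi a - r c)"
      unfolding bf(3) by (rule meas_two[OF N bf(1) bf(2)])
    also have "max 0 (min hi a - r c) = hi - r c"
    proof (cases "hi \<le> a")
      case True
      thus ?thesis using r_le[of c] c1 unfolding hi_def by simp
    next
      case False
      hence "c > (1 - \<alpha>) * a" using hi_le[of c] unfolding hi_def by simp
      hence "r c = hi" using r_a[of c] unfolding hi_def by simp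
      thus ?thesis using False by simp
    qed
    also have "N * (lft c - lo) + N * (hi - r c) = N * (E c - lo)"
    proof -
      have e: "E c - lo = (lft c - lo) + (hi - r c)" using E_big[OF c1] unfolding hi_def by simp
      show ?thesis by (simp only: e distrib_left)
    qed
    finally show ?thesis unfolding lo_def .
  qed
qed

lemma E_ge_lo: assumes "Sx c \<noteq> {}" shows "-c / (1 + \<alpha>) \<le> E c"
proof -
  have c: "0 \<le> c" "c \<le> (1 + \<alpha>) * a" using assms Sx_ne by auto
  show ?thesis
  proof (cases "c \<le> F xp")
    case True thus ?thesis using lo_nonpos[OF c(1)] hi_nonneg[OF c(1)] unfolding E_def by simp
  next
    case False
    hence c1: "F xp < c" by simp
    have "r c \<le> c / (1 - \<alpha>)" using r_le c1 by simp
    thus ?thesis using big_facts(1)[OF c1 c(2)] E_big[OF c1] by simp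
  qed
qed

end



context shk begin

lemma hi_le_s: "c \<le> F xp \<Longrightarrow> c / (1 - \<alpha>) \<le> s"
  using s_eq al1 by (simp add: divide_right_mono)

lemma main_eq: "(0 \<le> c \<and> c \<le> (1 + \<alpha>) * a \<and> -c / (1 + \<alpha>) \<le> x \<and> x \<le> E c) \<longleftrightarrow> (x, \<alpha> * x + c) \<in> gr g"
proof
  assume A: "0 \<le> c \<and> c \<le> (1 + \<alpha>) * a \<and> -c / (1 + \<alpha>) \<le> x \<and> x \<le> E c"
  have xa: "-a \<le> x" using A lo_le[of c] by linarith
  show "(x, \<alpha> * x + c) \<in> gr g"
  proof (cases "c \<le> F xp")
    case True
    hence Ec: "E c = c / (1 - \<alpha>)" unfolding E_def by simp
    have xs: "x \<le> s" using A Ec hi_le_s[OF True] by simp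
    have ab: "\<bar>x\<bar> \<le> \<alpha> * x + c" using abs_le_line[OF al0 al1] A Ec by simp
    have "c \<le> g x - \<alpha> * x" using G_ge_m[of x] True by simp
    thus ?thesis unfolding gr_g_mem using xa xs ab by simp
  next
    case False
    hence c1: "F xp < c" by simp
    define l where "l = lft c"
    have l: "l \<le> xp" "F l = c" using lft_prop[of c] c1 unfolding l_def by auto
    have Ec: "E c = h l" using False unfolding E_def l_def by simp
    have xs: "x \<le> s" using A Ec h_le_s[OF l(1)] by simp
    have "E c \<le> c / (1 - \<alpha>)" using E_big[OF c1] big_facts(2)[OF c1] A by simp
    hence ab: "\<bar>x\<bar> \<le> \<alpha> * x + c" using abs_le_line[OF al0 al1] A by simp
    have t: "tau x \<le> xp" "h (tau x) = x" using tau_prop[OF xs] by auto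
    have "tau x \<le> l" using h_le_iff[of "tau x" l] t l A Ec by simp
    hence "F l \<le> F (tau x)" using F_dec_iff[of l "tau x"] t l by simp
    hence "c \<le> g x - \<alpha> * x" using g_le[OF xs] l by simp
    thus ?thesis unfolding gr_g_mem using xa xs ab by simp
  qed
next
  assume B: "(x, \<alpha> * x + c) \<in> gr g"
  have xa: "-a \<le> x" and xs: "x \<le> s" and ab: "\<bar>x\<bar> \<le> \<alpha> * x + c" and cg: "c \<le> g x - \<alpha> * x"
    using B unfolding gr_g_mem by auto
  have lh: "-c / (1 + \<alpha>) \<le> x" "x \<le> c / (1 - \<alpha>)" using ab abs_le_line[OF al0 al1] by auto
  have "-c / (1 + \<alpha>) \<le> c / (1 - \<alpha>)" using lh by (rule order_trans)
  hence c0: "0 \<le> c" by (rule c_nonneg)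
  have t: "tau x \<le> xp" "h (tau x) = x" using tau_prop[OF xs] by auto
  have cF: "c \<le> F (tau x)" using cg g_le[OF xs] by simp
  have "-a \<le> tau x" using h_le_iff[of "-a" "tau x"] h_left[of "-a"] t xa xp_int by simp
  hence "F (tau x) \<le> F (-a)" using F_dec_iff[of "tau x" "-a"] t xp_int by simp
  hence c2: "c \<le> (1 + \<alpha>) * a" using cF Fma by simp
  have "x \<le> E c"
  proof (cases "c \<le> F xp")
    case True thus ?thesis using lh unfolding E_def by simp
  next
    case False
    hence c1: "F xp < c" by simp
    define l where "l = lft c"
    have l: "l \<le> xp" "F l = c" using lft_prop[of c] c1 unfolding l_def by auto
    have Ec: "E c = h l" using False unfolding E_def l_def by simp
    have "tau x \<le> l" using F_dec_iff[of l "tau x"] t l cF by simp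
    hence "h (tau x) \<le> h l" using h_le_iff[of "tau x" l] t l by simp
    thus ?thesis using t Ec by simp
  qed
  thus "0 \<le> c \<and> c \<le> (1 + \<alpha>) * a \<and> -c / (1 + \<alpha>) \<le> x \<and> x \<le> E c" using c0 c2 lh by simp
qed

lemma N_pos: "norm (1::real, \<alpha>) > 0" by (simp add: zero_prod_def)

lemma pt_eq: "(u, -u) + t *\<^sub>R vdir \<alpha> = (u + t / norm (1::real, \<alpha>), \<alpha> * (u + t / norm (1::real, \<alpha>)) + (-(1 + \<alpha>) * u))"
  by (simp add: vdir_def algebra_simps)

lemma tset_eq: "{t. (u, -u) + t *\<^sub>R vdir \<alpha> \<in> gr f} = {t. u + t / norm (1::real, \<alpha>) \<in> Sx (-(1 + \<alpha>) * u)}"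
  unfolding pt_eq Sx_def by simp

lemma u_eq: "-(-(1 + \<alpha>) * u) / (1 + \<alpha>) = u"
proof -
  have "1 + \<alpha> \<noteq> 0" using al0 by simp
  thus ?thesis by (simp add: field_simps)
qed

lemma Kslice_eq:
  "Kslice \<alpha> (gr f) (u, -u) = (if Sx (-(1 + \<alpha>) * u) = {} then {} else
     closed_segment (u, -u) ((u, -u) + (norm (1::real, \<alpha>) * (E (-(1 + \<alpha>) * u) - u)) *\<^sub>R vdir \<alpha>))"
proof -
  define c N where "c = -(1 + \<alpha>) * u" and "N = norm (1::real, \<alpha>)"
  have N: "N > 0" unfolding N_def by (rule N_pos)
  have ne: "gr f \<inter> {(u, -u) + t *\<^sub>R vdir \<alpha> | t. True} = {} \<longleftrightarrow> Sx c = {}"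
  proof
    assume e: "gr f \<inter> {(u, -u) + t *\<^sub>R vdir \<alpha> | t. True} = {}"
    show "Sx c = {}"
    proof (rule ccontr)
      assume "Sx c \<noteq> {}"
      then obtain x where x: "x \<in> Sx c" by blast
      define t where "t = N * (x - u)"
      have "u + t / N = x" unfolding t_def using N by simp
      hence "(u, -u) + t *\<^sub>R vdir \<alpha> \<in> gr f" using x unfolding pt_eq Sx_def c_def N_def[symmetric] by simp
      thus False using e by blast
    qed
  next
    assume e: "Sx c = {}"
    show "gr f \<inter> {(u, -u) + t *\<^sub>R vdir \<alpha> | t. True} = {}"
    proof (rule ccontr)
      assume "gr f \<inter> {(u, -u) + t *\<^sub>R vdir \<alpha> | t. True} \<noteq> {}"
      then obtain t where "(u, -u) + t *\<^sub>R vdir \<alpha> \<in> gr f" by blast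
      hence "u + t / N \<in> Sx c" unfolding pt_eq Sx_def c_def N_def by simp
      thus False using e by blast
    qed
  qed
  show ?thesis
  proof (cases "Sx c = {}")
    case True thus ?thesis unfolding Kslice_def using ne unfolding c_def by simp
  next
    case False
    have "measure lebesgue {t. (u, -u) + t *\<^sub>R vdir \<alpha> \<in> gr f} = N * (E c - u)"
      unfolding tset_eq N_def[symmetric] c_def[symmetric]
      using meas_Sx[OF N False, of u] u_eq[of u] unfolding c_def by simp
    thus ?thesis unfolding Kslice_def using ne False unfolding c_def N_def by simp
  qed
qed

lemma seg_mem:
  assumes L: "L \<ge> 0"
  shows "(x, y) \<in> closed_segment (u, -u) ((u, -u) + (norm (1::real, \<alpha>) * L) *\<^sub>R vdir \<alpha>) \<longleftrightarrow>
     y = \<alpha> * x + (-(1 + \<alpha>) * u) \<and> u \<le> x \<and> x \<le> u + L"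
proof -
  have Q: "(u, -u) + (norm (1::real, \<alpha>) * L) *\<^sub>R vdir \<alpha> = (u + L, -u + \<alpha> * L)"
    by (simp add: vdir_def zero_prod_def)
  have seg: "closed_segment (u, -u) (u + L, -u + \<alpha> * L) = {(u + \<theta> * L, -u + \<alpha> * (\<theta> * L)) | \<theta>. 0 \<le> \<theta> \<and> \<theta> \<le> 1}"
    unfolding closed_segment_def by (auto simp: algebra_simps)
  show ?thesis unfolding Q seg
  proof
    assume "(x, y) \<in> {(u + \<theta> * L, -u + \<alpha> * (\<theta> * L)) | \<theta>. 0 \<le> \<theta> \<and> \<theta> \<le> 1}"
    then obtain \<theta> where th: "0 \<le> \<theta>" "\<theta> \<le> 1" "x = u + \<theta> * L" "y = -u + \<alpha> * (\<theta> * L)" by blast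
    have "\<theta> * L \<le> L" using th L by (simp add: mult_left_le_one_le)
    thus "y = \<alpha> * x + (-(1 + \<alpha>) * u) \<and> u \<le> x \<and> x \<le> u + L" using th L by (simp add: algebra_simps)
  next
    assume A: "y = \<alpha> * x + (-(1 + \<alpha>) * u) \<and> u \<le> x \<and> x \<le> u + L"
    show "(x, y) \<in> {(u + \<theta> * L, -u + \<alpha> * (\<theta> * L)) | \<theta>. 0 \<le> \<theta> \<and> \<theta> \<le> 1}"
    proof (cases "L = 0")
      case True
      hence "x = u" using A by simp
      hence "(x, y) = (u + 0 * L, -u + \<alpha> * (0 * L))" using A by (simp add: algebra_simps)
      hence "\<exists>\<theta>. (x, y) = (u + \<theta> * L, -u + \<alpha> * (\<theta> * L)) \<and> 0 \<le> \<theta> \<and> \<theta> \<le> 1"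
        by (intro exI[of _ 0]) simp
      thus ?thesis by (simp only: mem_Collect_eq)
    next
      case False
      hence Lp: "L > 0" using L by simp
      define \<theta> where "\<theta> = (x - u) / L"
      have th: "0 \<le> \<theta>" "\<theta> \<le> 1" unfolding \<theta>_def using A Lp by auto
      have e: "\<theta> * L = x - u" unfolding \<theta>_def using Lp by simp
      have y: "y = -u + \<alpha> * (x - u)" using A by (simp add: algebra_simps)
      have "(x, y) = (u + \<theta> * L, -u + \<alpha> * (\<theta> * L))" unfolding e y by simp
      hence "\<exists>\<theta>. (x, y) = (u + \<theta> * L, -u + \<alpha> * (\<theta> * L)) \<and> 0 \<le> \<theta> \<and> \<theta> \<le> 1"
        using th by (intro exI[of _ \<theta>]) simp
      thus ?thesis by (simp only: mem_Collect_eq)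
    qed
  qed
qed

theorem main: "shake_set \<alpha> (gr f) = gr g"
proof (rule set_eqI)
  fix P :: "real \<times> real"
  obtain x y where P: "P = (x, y)" by (cases P)
  have "P \<in> shake_set \<alpha> (gr f) \<longleftrightarrow> (\<exists>u. (x, y) \<in> Kslice \<alpha> (gr f) (u, -u))"
    unfolding shake_set_def lineD_def P by blast
  also have "\<dots> \<longleftrightarrow> (\<exists>u. Sx (-(1 + \<alpha>) * u) \<noteq> {} \<and> y = \<alpha> * x + (-(1 + \<alpha>) * u) \<and> u \<le> x \<and> x \<le> E (-(1 + \<alpha>) * u))"
  proof -
    have "(x, y) \<in> Kslice \<alpha> (gr f) (u, -u) \<longleftrightarrow>
      Sx (-(1 + \<alpha>) * u) \<noteq> {} \<and> y = \<alpha> * x + (-(1 + \<alpha>) * u) \<and> u \<le> x \<and> x \<le> E (-(1 + \<alpha>) * u)" for u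
    proof (cases "Sx (-(1 + \<alpha>) * u) = {}")
      case True thus ?thesis unfolding Kslice_eq by simp
    next
      case False
      have L: "E (-(1 + \<alpha>) * u) - u \<ge> 0" using E_ge_lo[OF False] u_eq[of u] by simp
      show ?thesis unfolding Kslice_eq using False seg_mem[OF L, of x y u] by simp
    qed
    thus ?thesis by simp
  qed
  also have "\<dots> \<longleftrightarrow> (x, y) \<in> gr g"
  proof
    assume "\<exists>u. Sx (-(1 + \<alpha>) * u) \<noteq> {} \<and> y = \<alpha> * x + (-(1 + \<alpha>) * u) \<and> u \<le> x \<and> x \<le> E (-(1 + \<alpha>) * u)"
    then obtain u where u: "Sx (-(1 + \<alpha>) * u) \<noteq> {}" "y = \<alpha> * x + (-(1 + \<alpha>) * u)" "u \<le> x" "x \<le> E (-(1 + \<alpha>) * u)"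
      by blast
    define c where "c = -(1 + \<alpha>) * u"
    have "0 \<le> c \<and> c \<le> (1 + \<alpha>) * a \<and> -c / (1 + \<alpha>) \<le> x \<and> x \<le> E c"
      using u Sx_ne u_eq[of u] unfolding c_def by simp
    hence "(x, \<alpha> * x + c) \<in> gr g" using main_eq by blast
    thus "(x, y) \<in> gr g" using u unfolding c_def by simp
  next
    assume G: "(x, y) \<in> gr g"
    define c where "c = y - \<alpha> * x"
    have "(x, \<alpha> * x + c) \<in> gr g" using G unfolding c_def by simp
    hence c: "0 \<le> c \<and> c \<le> (1 + \<alpha>) * a \<and> -c / (1 + \<alpha>) \<le> x \<and> x \<le> E c" using main_eq by blast
    define u where "u = -c / (1 + \<alpha>)"
    have cu: "-(1 + \<alpha>) * u = c" unfolding u_def by (rule lo_eq)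
    show "\<exists>u. Sx (-(1 + \<alpha>) * u) \<noteq> {} \<and> y = \<alpha> * x + (-(1 + \<alpha>) * u) \<and> u \<le> x \<and> x \<le> E (-(1 + \<alpha>) * u)"
    proof -
      have "Sx c \<noteq> {}" using Sx_ne c by simp
      moreover have "y = \<alpha> * x + c" unfolding c_def by simp
      ultimately have "Sx (-(1 + \<alpha>) * u) \<noteq> {} \<and> y = \<alpha> * x + (-(1 + \<alpha>) * u) \<and> u \<le> x \<and> x \<le> E (-(1 + \<alpha>) * u)"
        unfolding cu using c unfolding u_def by simp
      thus ?thesis by blast
    qed
  qed
  finally show "P \<in> shake_set \<alpha> (gr f) \<longleftrightarrow> P \<in> gr g" unfolding P .
qed

end


theorem theorem4p7:
  fixes a \<alpha> :: real and f :: "real \<Rightarrow> real"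
  assumes "a > 0" and "0 \<le> \<alpha>" and "\<alpha> < 1" and "classC a f"
  shows "shake_set \<alpha> (gr f) = gr (shake_fun a \<alpha> f)"
proof -
  interpret shk a \<alpha> f by (rule shk.intro) (use assms in auto)
  show ?thesis by (rule main)
qed

end
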